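(* Let $x_a,x_b\in\mathbb{R}$ and $U=\{x\in C^1[a,b]: x(a)=x_a,\ x(b)=x_b\}$. If $x$ is a local minimizer of $J(x)=\int_a^b L(t,x(t),{}^CD_{a+}^{\alpha,\rho}x(t))\,dt$ on $U$, then for all $t\in[a,b]$ $$\partial_2L(t,x(t),{}^CD_{a+}^{\alpha,\rho} x(t))-D_{b-}^{\alpha,\rho}\big(\partial_3L(t,x(t),{}^CD_{a+}^{\alpha,\rho} x(t))\big)=0.$$
   Context: Fix $0<a<b<\infty$, $\alpha\in(0,1)$, $\rho>0$. For $x\in C^1[a,b]$, ${}^CD_{a+}^{\alpha,\rho} x(t)=\frac{\rho^\alpha}{\Gamma(1-\alpha)}\, t^{1-\rho}\frac{d}{dt}\int_a^t \frac{\tau^{\rho-1}}{(t^\rho-\tau^\rho)^\alpha}[x(\tau)-x(a)]\,d\tau=\frac{\rho^\alpha}{\Gamma(1-\alpha)}\int_a^t (t^\rho-\tau^\rho)^{-\alpha}x'(\tau)\,d\tau$. For a function $f$ on $[a,b]$, $D_{b-}^{\alpha,\rho} f(t)=\frac{\rho^\alpha}{\Gamma(1-\alpha)}\frac{d}{dt}\int_t^b (\tau^\rho-t^\rho)^{-\alpha}f(\tau)\,d\tau$. $\partial_i$ denotes the partial derivative with respect to the $i$-th argument. $L:[a,b]\times\mathbb{R}^2\to\mathbb{R}$ is continuously differentiable with respect to its second and third arguments, and for every $x\in C^1[a,b]$ the map $t\mapsto D_{b-}^{\alpha,\rho}(\partial_3L(t,x(t),{}^CD_{a+}^{\alpha,\rho}x(t)))$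 is continuous. $C^1[a,b]$ carries the norm $\|x\|=\max_{[a,b]}|x|+\max_{[a,b]}|{}^CD_{a+}^{\alpha,\rho}x|$, and $x$ is a local minimizer of $J$ on a set $D\subseteq C^1[a,b]$ if there is $\delta>0$ with $J(x)\le J(y)$ for all $y\in D$ with $\|y-x\|<\delta$. *)

theory Defs
  imports "HOL-Analysis.Analysis"
begin

definition C1_on :: "real \<Rightarrow> real \<Rightarrow> (real \<Rightarrow> real) \<Rightarrow> bool" where
  "C1_on a b x \<longleftrightarrow> (\<exists>x'. continuous_on {a..b} x' \<and>
      (\<forall>t\<in>{a..b}. (x has_real_derivative x' t) (at t within {a..b})))"

definition caputo :: "real \<Rightarrow> real \<Rightarrow> real \<Rightarrow> real \<Rightarrow> (real \<Rightarrow> real) \<Rightarrow> real \<Rightarrow> real" where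
  "caputo \<alpha> \<rho> a b x t = \<rho> powr \<alpha> / Gamma (1 - \<alpha>) *
     integral {a..t} (\<lambda>\<tau>. (t powr \<rho> - \<tau> powr \<rho>) powr (- \<alpha>) *
        vector_derivative x (at \<tau> within {a..b}))"

definition right_int :: "real \<Rightarrow> real \<Rightarrow> real \<Rightarrow> (real \<Rightarrow> real) \<Rightarrow> real \<Rightarrow> real" where
  "right_int \<alpha> \<rho> b f t = integral {t..b} (\<lambda>\<tau>. (\<tau> powr \<rho> - t powr \<rho>) powr (- \<alpha>) * f \<tau>)"

definition rightD :: "real \<Rightarrow> real \<Rightarrow> real \<Rightarrow> real \<Rightarrow> (real \<Rightarrow> real) \<Rightarrow> real \<Rightarrow> real" where
  "rightD \<alpha> \<rho> a b f t = \<rho> powr \<alpha> / Gamma (1 - \<alpha>) *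
     vector_derivative (right_int \<alpha> \<rho> b f) (at t within {a..b})"

definition C1norm :: "real \<Rightarrow> real \<Rightarrow> real \<Rightarrow> real \<Rightarrow> (real \<Rightarrow> real) \<Rightarrow> real" where
  "C1norm \<alpha> \<rho> a b x = (SUP t\<in>{a..b}. \<bar>x t\<bar>) + (SUP t\<in>{a..b}. \<bar>caputo \<alpha> \<rho> a b x t\<bar>)"

definition functional_J :: "real \<Rightarrow> real \<Rightarrow> real \<Rightarrow> real \<Rightarrow> (real \<Rightarrow> real \<Rightarrow> real \<Rightarrow> real)
    \<Rightarrow> (real \<Rightarrow> real) \<Rightarrow> real" where
  "functional_J \<alpha> \<rho> a b L x = integral {a..b} (\<lambda>t. L t (x t) (caputo \<alpha> \<rho> a b x t))"

definition local_minimizer_on ::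
    "real \<Rightarrow> real \<Rightarrow> real \<Rightarrow> real \<Rightarrow> ((real \<Rightarrow> real) \<Rightarrow> real) \<Rightarrow> (real \<Rightarrow> real) set
      \<Rightarrow> (real \<Rightarrow> real) \<Rightarrow> bool" where
  "local_minimizer_on \<alpha> \<rho> a b J D x \<longleftrightarrow> x \<in> D \<and>
     (\<exists>\<delta>>0. \<forall>y\<in>D. C1norm \<alpha> \<rho> a b (\<lambda>t. y t - x t) < \<delta> \<longrightarrow> J x \<le> J y)"

end

theory Submission
  imports Defs
begin


definition kern :: "real \<Rightarrow> real \<Rightarrow> real \<Rightarrow> real \<Rightarrow> real" where
  "kern \<alpha> \<rho> t \<tau> = (t powr \<rho> - \<tau> powr \<rho>) powr (- \<alpha>)"

lemma kern_nonneg: "kern \<alpha> \<rho> t \<tau> \<ge> 0" by (simp add: kern_def)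

lemma powr_diff_lower:
  fixes a b t \<tau> \<rho> :: real
  assumes "0 < a" "a \<le> \<tau>" "\<tau> < t" "t \<le> b" "0 < \<rho>"
  shows "\<rho> * min (a powr (\<rho>-1)) (b powr (\<rho>-1)) * (t - \<tau>) \<le> t powr \<rho> - \<tau> powr \<rho>"
proof -
  have "\<And>z::real. \<tau> \<le> z \<Longrightarrow> z \<le> t \<Longrightarrow> ((\<lambda>z. z powr \<rho>) has_real_derivative \<rho> * z powr (\<rho> - 1)) (at z)"
    using assms by (auto intro!: has_real_derivative_powr)
  from MVT2[OF assms(3) this] obtain z where z: "\<tau> < z" "z < t"
    "t powr \<rho> - \<tau> powr \<rho> = (t - \<tau>) * (\<rho> * z powr (\<rho> - 1))" by blast
  have "min (a powr (\<rho>-1)) (b powr (\<rho>-1)) \<le> z powr (\<rho> - 1)"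
  proof (cases "\<rho> \<ge> 1")
    case True
    then have "a powr (\<rho>-1) \<le> z powr (\<rho>-1)" using z assms by (intro powr_mono2) auto
    then show ?thesis by simp
  next
    case False
    then have "b powr (\<rho>-1) \<le> z powr (\<rho>-1)" using z assms by (intro powr_mono2') auto
    then show ?thesis by simp
  qed
  then have "\<rho> * min (a powr (\<rho>-1)) (b powr (\<rho>-1)) \<le> \<rho> * z powr (\<rho> - 1)"
    using assms by simp
  then show ?thesis using z assms by (simp add: mult_right_mono mult.commute)
qed

lemma kern_bound:
  fixes a b t \<tau> \<rho> \<alpha> :: real
  assumes "0 < a" "a \<le> \<tau>" "\<tau> \<le> t" "t \<le> b" "0 < \<rho>" "0 < \<alpha>"
  shows "kern \<alpha> \<rho> t \<tau> \<le> (\<rho> * min (a powr (\<rho>-1)) (b powr (\<rho>-1))) powr (-\<alpha>) * (t - \<tau>) powr (-\<alpha>)"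
proof (cases "\<tau> = t")
  case True then show ?thesis by (simp add: kern_def)
next
  case False
  define m where "m = \<rho> * min (a powr (\<rho>-1)) (b powr (\<rho>-1))"
  have m: "m > 0" using assms by (simp add: m_def)
  have lt: "\<tau> < t" using False assms by simp
  have "m * (t - \<tau>) \<le> t powr \<rho> - \<tau> powr \<rho>" unfolding m_def
    using powr_diff_lower[OF assms(1,2) lt assms(4,5)] .
  moreover have "0 < m * (t - \<tau>)" using m lt by simp
  ultimately have "(t powr \<rho> - \<tau> powr \<rho>) powr (-\<alpha>) \<le> (m * (t - \<tau>)) powr (-\<alpha>)"
    using assms by (intro powr_mono2') auto
  also have "\<dots> = m powr (-\<alpha>) * (t - \<tau>) powr (-\<alpha>)" using m lt by (simp add: powr_mult)
  finally show ?thesis by (simp add: kern_def m_def)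
qed

lemma powr_int_left:
  fixes u v \<alpha> :: real
  assumes "u \<le> v" "\<alpha> < 1"
  shows "integrable lborel (\<lambda>s. indicator {u..v} s * (v - s) powr (-\<alpha>))"
proof -
  have "(\<lambda>x. x powr (-\<alpha>)) integrable_on {0..v-u}"
    by (rule integrable_on_powr_from_0) (use assms in auto)
  hence "(\<lambda>x. x powr (-\<alpha>)) integrable_on cbox 0 (v-u)" by simp
  from integrable_affinity[OF this, of "-1" v]
  have "(\<lambda>t. (v - t) powr (-\<alpha>)) integrable_on {u..v}" by simp
  hence "(\<lambda>t. (v - t) powr (-\<alpha>)) absolutely_integrable_on {u..v}"
    by (subst absolutely_integrable_on_iff_nonneg) auto
  then show ?thesis unfolding set_integrable_def
    by (subst (asm) integrable_completion) (auto simp: mult_ac)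
qed

lemma powr_int_right:
  fixes u v \<alpha> :: real
  assumes "u \<le> v" "\<alpha> < 1"
  shows "integrable lborel (\<lambda>s. indicator {u..v} s * (s - u) powr (-\<alpha>))"
proof -
  have "(\<lambda>x. x powr (-\<alpha>)) integrable_on {0..v-u}"
    by (rule integrable_on_powr_from_0) (use assms in auto)
  hence "(\<lambda>x. x powr (-\<alpha>)) integrable_on cbox 0 (v-u)" by simp
  from integrable_affinity[OF this, of "1" "-u"]
  have "(\<lambda>t. (t - u) powr (-\<alpha>)) integrable_on {u..v}" by simp
  hence "(\<lambda>t. (t - u) powr (-\<alpha>)) absolutely_integrable_on {u..v}"
    by (subst absolutely_integrable_on_iff_nonneg) auto
  then show ?thesis unfolding set_integrable_def
    by (subst (asm) integrable_completion) (auto simp: mult_ac)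
qed

lemma int_left:
  fixes f :: "real \<Rightarrow> real" and a b t \<alpha> \<rho> B :: real
  assumes f: "f \<in> borel_measurable lborel" and fB: "\<And>s. s \<in> {a..t} \<Longrightarrow> \<bar>f s\<bar> \<le> B"
    and "0 < a" "a \<le> t" "t \<le> b" "0 < \<rho>" "0 < \<alpha>" "\<alpha> < 1"
  shows "integrable lborel (\<lambda>\<tau>. indicator {a..t} \<tau> * (kern \<alpha> \<rho> t \<tau> * f \<tau>))"
proof -
  define M where "M = (\<rho> * min (a powr (\<rho>-1)) (b powr (\<rho>-1))) powr (-\<alpha>)"
  have M: "M \<ge> 0" by (simp add: M_def)
  have B: "B \<ge> 0" using fB[of a] assms by fastforce
  have i: "integrable lborel (\<lambda>s. (B * M) * (indicator {a..t} s * (t - s) powr (-\<alpha>)))"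
    using powr_int_left[of a t \<alpha>] assms by auto
  show ?thesis
  proof (rule Bochner_Integration.integrable_bound[OF i])
    show "(\<lambda>\<tau>. indicator {a..t} \<tau> * (kern \<alpha> \<rho> t \<tau> * f \<tau>)) \<in> borel_measurable lborel"
      using f unfolding kern_def by measurable
    show "AE x in lborel. norm (indicator {a..t} x * (kern \<alpha> \<rho> t x * f x))
          \<le> norm (B * M * (indicator {a..t} x * (t - x) powr - \<alpha>))"
    proof (rule AE_I2)
      fix x
      show "norm (indicator {a..t} x * (kern \<alpha> \<rho> t x * f x))
          \<le> norm (B * M * (indicator {a..t} x * (t - x) powr - \<alpha>))"
      proof (cases "x \<in> {a..t}")
        case True
        have k: "kern \<alpha> \<rho> t x \<le> M * (t - x) powr (-\<alpha>)" unfolding M_def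
          using kern_bound[of a x t b \<rho> \<alpha>] True assms by auto
        have "\<bar>kern \<alpha> \<rho> t x * f x\<bar> = kern \<alpha> \<rho> t x * \<bar>f x\<bar>" by (simp add: abs_mult kern_nonneg)
        also have "\<dots> \<le> (M * (t - x) powr (-\<alpha>)) * B"
          using k fB[OF True] kern_nonneg M by (intro mult_mono) auto
        finally show ?thesis using True B M by (simp add: abs_mult mult_ac)
      qed simp
    qed
  qed
qed

lemma int_right:
  fixes g :: "real \<Rightarrow> real" and a b \<tau> \<alpha> \<rho> B :: real
  assumes g: "g \<in> borel_measurable lborel" and gB: "\<And>s. s \<in> {\<tau>..b} \<Longrightarrow> \<bar>g s\<bar> \<le> B"
    and "0 < a" "a \<le> \<tau>" "\<tau> \<le> b" "0 < \<rho>" "0 < \<alpha>" "\<alpha> < 1"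
  shows "integrable lborel (\<lambda>t. indicator {\<tau>..b} t * (kern \<alpha> \<rho> t \<tau> * g t))"
proof -
  define M where "M = (\<rho> * min (a powr (\<rho>-1)) (b powr (\<rho>-1))) powr (-\<alpha>)"
  have M: "M \<ge> 0" by (simp add: M_def)
  have B: "B \<ge> 0" using gB[of b] assms by fastforce
  have i: "integrable lborel (\<lambda>s. (B * M) * (indicator {\<tau>..b} s * (s - \<tau>) powr (-\<alpha>)))"
    using powr_int_right[of \<tau> b \<alpha>] assms by auto
  show ?thesis
  proof (rule Bochner_Integration.integrable_bound[OF i])
    show "(\<lambda>t. indicator {\<tau>..b} t * (kern \<alpha> \<rho> t \<tau> * g t)) \<in> borel_measurable lborel"
      using g unfolding kern_def by measurable
    show "AE x in lborel. norm (indicator {\<tau>..b} x * (kern \<alpha> \<rho> x \<tau> * g x))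
          \<le> norm (B * M * (indicator {\<tau>..b} x * (x - \<tau>) powr - \<alpha>))"
    proof (rule AE_I2)
      fix x
      show "norm (indicator {\<tau>..b} x * (kern \<alpha> \<rho> x \<tau> * g x))
          \<le> norm (B * M * (indicator {\<tau>..b} x * (x - \<tau>) powr - \<alpha>))"
      proof (cases "x \<in> {\<tau>..b}")
        case True
        have k: "kern \<alpha> \<rho> x \<tau> \<le> M * (x - \<tau>) powr (-\<alpha>)" unfolding M_def
          using kern_bound[of a \<tau> x b \<rho> \<alpha>] True assms by auto
        have "\<bar>kern \<alpha> \<rho> x \<tau> * g x\<bar> = kern \<alpha> \<rho> x \<tau> * \<bar>g x\<bar>" by (simp add: abs_mult kern_nonneg)
        also have "\<dots> \<le> (M * (x - \<tau>) powr (-\<alpha>)) * B"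
          using k gB[OF True] kern_nonneg M by (intro mult_mono) auto
        finally show ?thesis using True B M by (simp add: abs_mult mult_ac)
      qed simp
    qed
  qed
qed



lemma cont_meas:
  fixes f :: "real \<Rightarrow> real"
  assumes "continuous_on UNIV f"
  shows "f \<in> borel_measurable lborel"
  using borel_measurable_continuous_onI[OF assms] by simp

lemma lint_eq:
  fixes f :: "real \<Rightarrow> real" and a b t \<alpha> \<rho> B :: real
  assumes f: "f \<in> borel_measurable lborel" and fB: "\<And>s. s \<in> {a..t} \<Longrightarrow> \<bar>f s\<bar> \<le> B"
    and "0 < a" "a \<le> t" "t \<le> b" "0 < \<rho>" "0 < \<alpha>" "\<alpha> < 1"
  shows "(\<lambda>\<tau>. kern \<alpha> \<rho> t \<tau> * f \<tau>) integrable_on {a..t}"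
    "integral {a..t} (\<lambda>\<tau>. kern \<alpha> \<rho> t \<tau> * f \<tau>) =
       (\<integral>\<tau>. indicator {a..t} \<tau> * (kern \<alpha> \<rho> t \<tau> * f \<tau>) \<partial>lborel)"
proof -
  have i: "set_integrable lborel {a..t} (\<lambda>\<tau>. kern \<alpha> \<rho> t \<tau> * f \<tau>)"
    unfolding set_integrable_def using int_left[OF assms] by simp
  show "(\<lambda>\<tau>. kern \<alpha> \<rho> t \<tau> * f \<tau>) integrable_on {a..t}"
    using set_borel_integral_eq_integral(1)[OF i] .
  show "integral {a..t} (\<lambda>\<tau>. kern \<alpha> \<rho> t \<tau> * f \<tau>) =
       (\<integral>\<tau>. indicator {a..t} \<tau> * (kern \<alpha> \<rho> t \<tau> * f \<tau>) \<partial>lborel)"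
    using set_borel_integral_eq_integral(2)[OF i] unfolding set_lebesgue_integral_def by simp
qed

lemma rint_eq:
  fixes g :: "real \<Rightarrow> real" and a b \<tau> \<alpha> \<rho> B :: real
  assumes g: "g \<in> borel_measurable lborel" and gB: "\<And>s. s \<in> {\<tau>..b} \<Longrightarrow> \<bar>g s\<bar> \<le> B"
    and "0 < a" "a \<le> \<tau>" "\<tau> \<le> b" "0 < \<rho>" "0 < \<alpha>" "\<alpha> < 1"
  shows "(\<lambda>t. kern \<alpha> \<rho> t \<tau> * g t) integrable_on {\<tau>..b}"
    "integral {\<tau>..b} (\<lambda>t. kern \<alpha> \<rho> t \<tau> * g t) =
       (\<integral>t. indicator {\<tau>..b} t * (kern \<alpha> \<rho> t \<tau> * g t) \<partial>lborel)"
proof -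
  have i: "set_integrable lborel {\<tau>..b} (\<lambda>t. kern \<alpha> \<rho> t \<tau> * g t)"
    unfolding set_integrable_def using int_right[OF assms] by simp
  show "(\<lambda>t. kern \<alpha> \<rho> t \<tau> * g t) integrable_on {\<tau>..b}"
    using set_borel_integral_eq_integral(1)[OF i] .
  show "integral {\<tau>..b} (\<lambda>t. kern \<alpha> \<rho> t \<tau> * g t) =
       (\<integral>t. indicator {\<tau>..b} t * (kern \<alpha> \<rho> t \<tau> * g t) \<partial>lborel)"
    using set_borel_integral_eq_integral(2)[OF i] unfolding set_lebesgue_integral_def by simp
qed




lemma cont_bound:
  fixes f :: "real \<Rightarrow> real"
  assumes "continuous_on {a..b} f"
  obtains B where "\<And>x. x \<in> {a..b} \<Longrightarrow> \<bar>f x\<bar> \<le> B"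
proof -
  have "bounded (f ` {a..b})" using compact_continuous_image[OF assms] compact_imp_bounded by blast
  then show ?thesis using that unfolding bounded_real by blast
qed

lemma lint_cont:
  fixes f :: "real \<Rightarrow> real" and a b \<alpha> \<rho> :: real
  assumes fc: "continuous_on UNIV f"
    and "0 < a" "0 < \<rho>" "0 < \<alpha>" "\<alpha> < 1"
  shows "continuous_on {a..b} (\<lambda>t. integral {a..t} (\<lambda>\<tau>. kern \<alpha> \<rho> t \<tau> * f \<tau>))"
proof -
  have fm: "f \<in> borel_measurable lborel" using cont_meas[OF fc] .
  obtain B where B: "\<And>x. x \<in> {a..b} \<Longrightarrow> \<bar>f x\<bar> \<le> B"
    using cont_bound[OF continuous_on_subset[OF fc subset_UNIV]] by blast
  define M where "M = (\<rho> * min (a powr (\<rho>-1)) (b powr (\<rho>-1))) powr (-\<alpha>)"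
  have M: "M \<ge> 0" by (simp add: M_def)
  define G where "G t s = indicator {0..t-a} s * (kern \<alpha> \<rho> t (t - s) * f (t - s))" for t s
  have eqG: "integral {a..t} (\<lambda>\<tau>. kern \<alpha> \<rho> t \<tau> * f \<tau>) = (\<integral>s. G t s \<partial>lborel)"
    if t: "t \<in> {a..b}" for t
  proof -
    have "integral {a..t} (\<lambda>\<tau>. kern \<alpha> \<rho> t \<tau> * f \<tau>) =
       (\<integral>\<tau>. indicator {a..t} \<tau> * (kern \<alpha> \<rho> t \<tau> * f \<tau>) \<partial>lborel)"
      using lint_eq(2)[OF fm, of a t B b \<rho> \<alpha>] B t assms by auto
    also have "\<dots> = (\<integral>s. indicator {a..t} (t + (-1) * s) * (kern \<alpha> \<rho> t (t + (-1) * s) * f (t + (-1) * s)) \<partial>lborel)"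
      using lborel_integral_real_affine[of "-1" "\<lambda>\<tau>. indicator {a..t} \<tau> * (kern \<alpha> \<rho> t \<tau> * f \<tau>)" t]
      by simp
    also have "\<dots> = (\<integral>s. G t s \<partial>lborel)"
      unfolding G_def by (intro Bochner_Integration.integral_cong) (auto simp: indicator_def)
    finally show ?thesis .
  qed
  show ?thesis
  proof (rule continuous_on_sequentiallyI)
    fix u :: "nat \<Rightarrow> real" and t0
    assume u: "\<forall>n. u n \<in> {a..b}" and t0: "t0 \<in> {a..b}" and lim: "u \<longlonglongrightarrow> t0"
    have "(\<lambda>n. \<integral>s. G (u n) s \<partial>lborel) \<longlonglongrightarrow> (\<integral>s. G t0 s \<partial>lborel)"
    proof (rule integral_dominated_convergence[where w="\<lambda>s. B * M * (indicator {0..b-a} s * (s - 0) powr (-\<alpha>))"])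
      show "G t0 \<in> borel_measurable lborel"
        unfolding G_def kern_def using fm by measurable
      show "G (u n) \<in> borel_measurable lborel" for n
        unfolding G_def kern_def using fm by measurable
      show "integrable lborel (\<lambda>s. B * M * (indicator {0..b-a} s * (s - 0) powr (-\<alpha>)))"
        using powr_int_right[of 0 "b-a" \<alpha>] t0 assms by auto
      show "AE s in lborel. norm (G (u n) s) \<le> B * M * (indicator {0..b-a} s * (s - 0) powr (-\<alpha>))" for n
      proof (rule AE_I2)
        fix s
        show "norm (G (u n) s) \<le> B * M * (indicator {0..b-a} s * (s - 0) powr (-\<alpha>))"
        proof (cases "s \<in> {0..u n - a}")
          case True
          have un: "u n \<in> {a..b}" using u by blast
          have k: "kern \<alpha> \<rho> (u n) (u n - s) \<le> M * s powr (-\<alpha>)" unfolding M_def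
            using kern_bound[of a "u n - s" "u n" b \<rho> \<alpha>] True assms un by auto
          have fb: "\<bar>f (u n - s)\<bar> \<le> B" using B True un by auto
          have "\<bar>kern \<alpha> \<rho> (u n) (u n - s) * f (u n - s)\<bar> = kern \<alpha> \<rho> (u n) (u n - s) * \<bar>f (u n - s)\<bar>"
            by (simp add: abs_mult kern_nonneg)
          also have "\<dots> \<le> (M * s powr (-\<alpha>)) * B"
            using k fb kern_nonneg M by (intro mult_mono) auto
          finally show ?thesis using True un by (simp add: G_def mult_ac)
        next
          case False
          have "0 \<le> B" using B[of a] t0 by force
          then show ?thesis using False M by (simp add: G_def indicator_def)
        qed
      qed
      have A1: "AE s in lborel. s \<noteq> 0" by (rule AE_lborel_singleton)
      have A2: "AE s in lborel. s \<noteq> t0 - a" by (rule AE_lborel_singleton)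
      show "AE s in lborel. (\<lambda>n. G (u n) s) \<longlonglongrightarrow> G t0 s"
        using A1 A2
      proof eventually_elim
        case (elim s)
        consider "s < 0" | "s > t0 - a" | "0 < s" "s < t0 - a" using elim by linarith
        then show ?case
        proof cases
          case 1
          then show ?thesis by (simp add: G_def)
        next
          case 2
          have ev: "eventually (\<lambda>n. u n < s + a) sequentially"
            using order_tendstoD(2)[OF lim, of "s + a"] 2 by simp
          have "eventually (\<lambda>n. G (u n) s = 0) sequentially"
            using ev by eventually_elim (simp add: G_def)
          moreover have "G t0 s = 0" using 2 by (simp add: G_def)
          ultimately show ?thesis by (simp add: tendsto_cong)
        next
          case 3
          have ev: "eventually (\<lambda>n. s + a < u n) sequentially"
            using order_tendstoD(1)[OF lim, of "s + a"] 3 by simp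
          have eq: "eventually (\<lambda>n. G (u n) s = kern \<alpha> \<rho> (u n) (u n - s) * f (u n - s)) sequentially"
            using ev by eventually_elim (use 3 in \<open>simp add: G_def\<close>)
          have t0pos: "t0 > 0" "t0 - s > 0" using 3 t0 assms by auto
          have l1: "(\<lambda>n. u n powr \<rho> - (u n - s) powr \<rho>) \<longlonglongrightarrow> t0 powr \<rho> - (t0 - s) powr \<rho>"
            using t0pos by (intro tendsto_intros lim) auto
          have pos: "t0 powr \<rho> - (t0 - s) powr \<rho> > 0"
            using powr_less_mono2[of \<rho> "t0 - s" t0] t0pos 3 assms by auto
          have l2: "(\<lambda>n. kern \<alpha> \<rho> (u n) (u n - s)) \<longlonglongrightarrow> kern \<alpha> \<rho> t0 (t0 - s)"
            unfolding kern_def using tendsto_powr[OF l1 tendsto_const] pos by auto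
          have l3: "(\<lambda>n. f (u n - s)) \<longlonglongrightarrow> f (t0 - s)"
            by (rule continuous_on_tendsto_compose[OF fc]) (auto intro!: tendsto_intros lim)
          have "G t0 s = kern \<alpha> \<rho> t0 (t0 - s) * f (t0 - s)" using 3 by (simp add: G_def)
          then show ?thesis using tendsto_mult[OF l2 l3] eq by (simp add: tendsto_cong)
        qed
      qed
    qed
    then show "(\<lambda>n. integral {a..u n} (\<lambda>\<tau>. kern \<alpha> \<rho> (u n) \<tau> * f \<tau>))
        \<longlonglongrightarrow> integral {a..t0} (\<lambda>\<tau>. kern \<alpha> \<rho> t0 \<tau> * f \<tau>)"
      using eqG u t0 by simp
  qed
qed




lemma powr_int_bound:
  fixes a b t \<alpha> :: real
  assumes "a \<le> t" "t \<le> b" "\<alpha> < 1"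
  shows "(\<integral>\<tau>. indicator {a..t} \<tau> * (t - \<tau>) powr (-\<alpha>) \<partial>lborel)
       \<le> (\<integral>s. indicator {0..b-a} s * (s - 0) powr (-\<alpha>) \<partial>lborel)"
proof -
  have "(\<integral>\<tau>. indicator {a..t} \<tau> * (t - \<tau>) powr (-\<alpha>) \<partial>lborel)
      = (\<integral>s. indicator {a..t} (t + (-1) * s) * (t - (t + (-1) * s)) powr (-\<alpha>) \<partial>lborel)"
    using lborel_integral_real_affine[of "-1" "\<lambda>\<tau>. indicator {a..t} \<tau> * (t - \<tau>) powr (-\<alpha>)" t]
    by simp
  also have "\<dots> = (\<integral>s. indicator {0..t-a} s * (s - 0) powr (-\<alpha>) \<partial>lborel)"
    by (intro Bochner_Integration.integral_cong) (auto simp: indicator_def)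
  also have "\<dots> \<le> (\<integral>s. indicator {0..b-a} s * (s - 0) powr (-\<alpha>) \<partial>lborel)"
    using powr_int_right[of 0 "t-a" \<alpha>] powr_int_right[of 0 "b-a" \<alpha>] assms
    by (intro integral_mono) (auto simp: indicator_def)
  finally show ?thesis .
qed

lemma swap:
  fixes g h :: "real \<Rightarrow> real" and a b \<alpha> \<rho> :: real
  assumes gc: "continuous_on UNIV g" and hc: "continuous_on UNIV h"
    and "0 < a" "a \<le> b" "0 < \<rho>" "0 < \<alpha>" "\<alpha> < 1"
  shows "integral {a..b} (\<lambda>t. g t * integral {a..t} (\<lambda>\<tau>. kern \<alpha> \<rho> t \<tau> * h \<tau>))
       = integral {a..b} (\<lambda>\<tau>. h \<tau> * integral {\<tau>..b} (\<lambda>t. kern \<alpha> \<rho> t \<tau> * g t))"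
proof -
  have gm[measurable]: "g \<in> borel_measurable lborel" using cont_meas[OF gc] .
  have hm[measurable]: "h \<in> borel_measurable lborel" using cont_meas[OF hc] .
  have gm'[measurable]: "g \<in> borel_measurable borel" using borel_measurable_continuous_onI[OF gc] .
  have hm'[measurable]: "h \<in> borel_measurable borel" using borel_measurable_continuous_onI[OF hc] .
  obtain Bg where Bg: "\<And>x. x \<in> {a..b} \<Longrightarrow> \<bar>g x\<bar> \<le> Bg"
    using cont_bound[OF continuous_on_subset[OF gc subset_UNIV]] by blast
  obtain Bh where Bh: "\<And>x. x \<in> {a..b} \<Longrightarrow> \<bar>h x\<bar> \<le> Bh"
    using cont_bound[OF continuous_on_subset[OF hc subset_UNIV]] by blast
  have Bg0: "Bg \<ge> 0" using Bg[of a] assms by force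
  have Bh0: "Bh \<ge> 0" using Bh[of a] assms by force
  define M where "M = (\<rho> * min (a powr (\<rho>-1)) (b powr (\<rho>-1))) powr (-\<alpha>)"
  have M: "M \<ge> 0" by (simp add: M_def)
  define C0 where "C0 = (\<integral>s. indicator {0..b-a} s * (s - 0) powr (-\<alpha>) \<partial>lborel)"
  have C0: "C0 \<ge> 0" unfolding C0_def by (intro Bochner_Integration.integral_nonneg) (auto simp: indicator_def)
  define F where "F t \<tau> = (indicator {a..b} t * g t) * (indicator {a..t} \<tau> * (kern \<alpha> \<rho> t \<tau> * h \<tau>))"
    for t \<tau> :: real
  have F2: "F t \<tau> = (indicator {a..b} \<tau> * h \<tau>) * (indicator {\<tau>..b} t * (kern \<alpha> \<rho> t \<tau> * g t))" for t \<tau>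
    unfolding F_def by (auto simp: indicator_def)
  have Fm[measurable]: "(\<lambda>(t, \<tau>). F t \<tau>) \<in> borel_measurable (lborel \<Otimes>\<^sub>M lborel)"
    unfolding F_def kern_def indicator_def atLeastAtMost_iff by measurable
  have inner1: "integrable lborel (\<lambda>\<tau>. F t \<tau>)" for t
  proof (cases "t \<in> {a..b}")
    case True
    have "integrable lborel (\<lambda>\<tau>. indicator {a..t} \<tau> * (kern \<alpha> \<rho> t \<tau> * h \<tau>))"
      using int_left[OF hm, of a t Bh b \<rho> \<alpha>] Bh True assms by auto
    then show ?thesis unfolding F_def by simp
  qed (simp add: F_def)
  have Fint: "integrable (lborel \<Otimes>\<^sub>M lborel) (\<lambda>(t, \<tau>). F t \<tau>)"
  proof (rule lborel_pair.Fubini_integrable)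
    show "(\<lambda>(t, \<tau>). F t \<tau>) \<in> borel_measurable (lborel \<Otimes>\<^sub>M lborel)" by (rule Fm)
    show "AE t in lborel. integrable lborel (\<lambda>\<tau>. case (t, \<tau>) of (t, \<tau>) \<Rightarrow> F t \<tau>)"
      using inner1 by simp
    have dom: "integrable lborel (\<lambda>t. indicator {a..b} t *\<^sub>R (Bg * Bh * M * C0))"
      by (rule borel_integrable_compact) auto
    show "integrable lborel (\<lambda>t. \<integral>\<tau>. norm (case (t, \<tau>) of (t, \<tau>) \<Rightarrow> F t \<tau>) \<partial>lborel)"
    proof (rule Bochner_Integration.integrable_bound[OF dom])
      show "(\<lambda>t. \<integral>\<tau>. norm (case (t, \<tau>) of (t, \<tau>) \<Rightarrow> F t \<tau>) \<partial>lborel) \<in> borel_measurable lborel"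
        by (rule lborel.borel_measurable_lebesgue_integral) (use Fm in measurable)
      show "AE t in lborel. norm (\<integral>\<tau>. norm (case (t, \<tau>) of (t, \<tau>) \<Rightarrow> F t \<tau>) \<partial>lborel)
          \<le> norm (indicator {a..b} t *\<^sub>R (Bg * Bh * M * C0))"
      proof (rule AE_I2)
        fix t
        show "norm (\<integral>\<tau>. norm (case (t, \<tau>) of (t, \<tau>) \<Rightarrow> F t \<tau>) \<partial>lborel)
          \<le> norm (indicator {a..b} t *\<^sub>R (Bg * Bh * M * C0))"
        proof (cases "t \<in> {a..b}")
          case True
          have pb: "norm (F t \<tau>) \<le> (Bg * Bh * M) * (indicator {a..t} \<tau> * (t - \<tau>) powr (-\<alpha>))" for \<tau>
          proof (cases "\<tau> \<in> {a..t}")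
            case T2: True
            have k: "kern \<alpha> \<rho> t \<tau> \<le> M * (t - \<tau>) powr (-\<alpha>)" unfolding M_def
              using kern_bound[of a \<tau> t b \<rho> \<alpha>] True T2 assms by auto
            have "norm (F t \<tau>) = \<bar>g t\<bar> * (kern \<alpha> \<rho> t \<tau> * \<bar>h \<tau>\<bar>)"
              using True T2 by (simp add: F_def abs_mult kern_nonneg)
            also have "\<dots> \<le> Bg * ((M * (t - \<tau>) powr (-\<alpha>)) * Bh)"
              using Bg[OF True] Bh[of \<tau>] T2 True k kern_nonneg M Bg0 Bh0
              by (intro mult_mono) auto
            finally show ?thesis using T2 by (simp add: mult_ac)
          qed (simp add: F_def)
          have "(\<integral>\<tau>. norm (F t \<tau>) \<partial>lborel)
              \<le> (\<integral>\<tau>. (Bg * Bh * M) * (indicator {a..t} \<tau> * (t - \<tau>) powr (-\<alpha>)) \<partial>lborel)"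
            using inner1[of t] powr_int_left[of a t \<alpha>] True assms pb
            by (intro integral_mono) auto
          also have "\<dots> \<le> (Bg * Bh * M) * C0"
            unfolding integral_mult_right_zero C0_def
            using powr_int_bound[of a t b \<alpha>] True assms Bg0 Bh0 M
            by (intro mult_left_mono) auto
          finally show ?thesis using True by simp
        qed (simp add: F_def)
      qed
    qed
  qed
  have eq1: "(\<integral>\<tau>. F t \<tau> \<partial>lborel) = indicator {a..b} t * (g t * integral {a..t} (\<lambda>\<tau>. kern \<alpha> \<rho> t \<tau> * h \<tau>))" for t
  proof (cases "t \<in> {a..b}")
    case True
    have "integral {a..t} (\<lambda>\<tau>. kern \<alpha> \<rho> t \<tau> * h \<tau>) = (\<integral>\<tau>. indicator {a..t} \<tau> * (kern \<alpha> \<rho> t \<tau> * h \<tau>) \<partial>lborel)"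
      using lint_eq(2)[OF hm, of a t Bh b \<rho> \<alpha>] Bh True assms by auto
    then show ?thesis unfolding F_def using True by simp
  qed (simp add: F_def)
  have eq2: "(\<integral>t. F t \<tau> \<partial>lborel) = indicator {a..b} \<tau> * (h \<tau> * integral {\<tau>..b} (\<lambda>t. kern \<alpha> \<rho> t \<tau> * g t))" for \<tau>
  proof (cases "\<tau> \<in> {a..b}")
    case True
    have "integral {\<tau>..b} (\<lambda>t. kern \<alpha> \<rho> t \<tau> * g t) = (\<integral>t. indicator {\<tau>..b} t * (kern \<alpha> \<rho> t \<tau> * g t) \<partial>lborel)"
      using rint_eq(2)[OF gm, of \<tau> b Bg a \<rho> \<alpha>] Bg True assms by auto
    then show ?thesis unfolding F2 using True by simp
  qed (simp add: F2)
  have fub: "(\<integral>\<tau>. (\<integral>t. F t \<tau> \<partial>lborel) \<partial>lborel) = (\<integral>t. (\<integral>\<tau>. F t \<tau> \<partial>lborel) \<partial>lborel)"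
    using lborel_pair.Fubini_integral[of F] Fint by simp
  have c1: "continuous_on {a..b} (\<lambda>t. g t * integral {a..t} (\<lambda>\<tau>. kern \<alpha> \<rho> t \<tau> * h \<tau>))"
    by (intro continuous_intros continuous_on_subset[OF gc] lint_cont[OF hc]) (use assms in auto)
  have si1: "set_integrable lborel {a..b} (\<lambda>t. g t * integral {a..t} (\<lambda>\<tau>. kern \<alpha> \<rho> t \<tau> * h \<tau>))"
    unfolding set_integrable_def by (rule borel_integrable_compact[OF _ c1]) auto
  have "integrable lborel (\<lambda>\<tau>. \<integral>t. F t \<tau> \<partial>lborel)"
    using lborel_pair.integrable_snd[of F] Fint by simp
  then have si2: "set_integrable lborel {a..b} (\<lambda>\<tau>. h \<tau> * integral {\<tau>..b} (\<lambda>t. kern \<alpha> \<rho> t \<tau> * g t))"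
    unfolding set_integrable_def eq2 by simp
  have "integral {a..b} (\<lambda>t. g t * integral {a..t} (\<lambda>\<tau>. kern \<alpha> \<rho> t \<tau> * h \<tau>))
      = (\<integral>t. (\<integral>\<tau>. F t \<tau> \<partial>lborel) \<partial>lborel)"
    using set_borel_integral_eq_integral(2)[OF si1] unfolding set_lebesgue_integral_def eq1 by simp
  also have "\<dots> = (\<integral>\<tau>. (\<integral>t. F t \<tau> \<partial>lborel) \<partial>lborel)" using fub by simp
  also have "\<dots> = integral {a..b} (\<lambda>\<tau>. h \<tau> * integral {\<tau>..b} (\<lambda>t. kern \<alpha> \<rho> t \<tau> * g t))"
    using set_borel_integral_eq_integral(2)[OF si2] unfolding set_lebesgue_integral_def eq2 by simp
  finally show ?thesis .
qed




lemma chain2: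
  fixes L L2 L3 :: "real \<Rightarrow> real \<Rightarrow> real"
  assumes d2: "\<And>u v. ((\<lambda>w. L w v) has_real_derivative L2 u v) (at u)"
   and d3: "\<And>u v. ((\<lambda>w. L u w) has_real_derivative L3 u v) (at v)"
   and c3: "continuous_on UNIV (\<lambda>(u,v). L3 u v)"
  shows "((\<lambda>e. L (p + e * q) (r + e * s)) has_real_derivative
           (L2 (p+e0 * q) (r+e0 * s) * q + L3 (p+e0 * q) (r+e0 * s) * s)) (at e0)"
proof -
  define u0 where "u0 = p + e0 * q"
  define v0 where "v0 = r + e0 * s"
  have fx: "((\<lambda>u. L u v0) has_derivative (*) (L2 u0 v0)) (at u0 within UNIV)"
    using d2[where u=u0 and v=v0] by (simp add: has_field_derivative_def)
  have fy: "((\<lambda>v. L u v) has_derivative blinfun_apply (blinfun_mult_right (L3 u v))) (at v within UNIV)"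
    for u v using d3[where u=u and v=v] by (simp add: has_field_derivative_def)
  have cc: "continuous (at (u0, v0) within UNIV \<times> UNIV) (\<lambda>(u, v). blinfun_mult_right (L3 u v))"
  proof -
    have "continuous (at (u0, v0)) (\<lambda>(u, v). L3 u v)"
      using c3 by (simp add: continuous_on_eq_continuous_at)
    then have "continuous (at (u0, v0)) (\<lambda>z. blinfun_mult_right ((\<lambda>(u, v). L3 u v) z))"
      by (intro continuous_intros)
    then show ?thesis by (simp add: case_prod_unfold)
  qed
  have J: "((\<lambda>(u, v). L u v) has_derivative (\<lambda>(tu, tv). L2 u0 v0 * tu + blinfun_apply (blinfun_mult_right (L3 u0 v0)) tv)) (at (u0, v0) within UNIV \<times> UNIV)"
    by (rule has_derivative_partialsI[OF fx fy cc]) auto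
  have J': "((\<lambda>(u, v). L u v) has_derivative (\<lambda>(tu, tv). L2 u0 v0 * tu + L3 u0 v0 * tv)) (at (u0, v0))"
    using J by simp
  have I: "((\<lambda>e. (p + e * q, r + e * s)) has_derivative (\<lambda>h. (h * q, h * s))) (at e0)"
    by (auto intro!: derivative_eq_intros)
  have "((\<lambda>e. (\<lambda>(u, v). L u v) (p + e * q, r + e * s)) has_derivative
      (\<lambda>h. (\<lambda>(tu, tv). L2 u0 v0 * tu + L3 u0 v0 * tv) (h * q, h * s))) (at e0)"
  proof -
    have "((\<lambda>(u, v). L u v) has_derivative (\<lambda>(tu, tv). L2 u0 v0 * tu + L3 u0 v0 * tv)) (at (p + e0 * q, r + e0 * s))"
      using J' unfolding u0_def v0_def .
    from diff_chain_at[OF I this] show ?thesis by (simp add: o_def)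
  qed
  then have "((\<lambda>e. L (p + e * q) (r + e * s)) has_derivative
      (\<lambda>h. L2 u0 v0 * (h * q) + L3 u0 v0 * (h * s))) (at e0)" by simp
  then have "((\<lambda>e. L (p + e * q) (r + e * s)) has_derivative
      (*) (L2 u0 v0 * q + L3 u0 v0 * s)) (at e0)"
    by (rule has_derivative_eq_rhs) (auto simp: algebra_simps)
  then show ?thesis unfolding has_field_derivative_def u0_def v0_def .
qed




lemma fund:
  fixes E :: "real \<Rightarrow> real" and a b :: real
  assumes ab: "a < b" and Ec: "continuous_on {a..b} E"
    and H: "\<And>\<eta>. polynomial_function \<eta> \<Longrightarrow> \<eta> a = 0 \<Longrightarrow> \<eta> b = 0 \<Longrightarrow>
              integral {a..b} (\<lambda>t. \<eta> t * E t) = 0"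
  shows "\<forall>t\<in>{a..b}. E t = 0"
proof -
  define w where "w t = (t - a) * (b - t)" for t :: real
  have p1: "polynomial_function (\<lambda>t::real. t - a)"
    by (intro polynomial_function_diff polynomial_function_id polynomial_function_const)
  have p2: "polynomial_function (\<lambda>t::real. b - t)"
    by (intro polynomial_function_diff polynomial_function_id polynomial_function_const)
  have wp: "polynomial_function w" unfolding w_def
    using polynomial_function_mult[OF p1 p2] by simp
  have wc: "continuous_on {a..b} w" unfolding w_def by (intro continuous_intros)
  obtain BE where BE: "\<And>t. t \<in> {a..b} \<Longrightarrow> \<bar>E t\<bar> \<le> BE" using cont_bound[OF Ec] by blast
  obtain Bw where Bw: "\<And>t. t \<in> {a..b} \<Longrightarrow> \<bar>w t\<bar> \<le> Bw" using cont_bound[OF wc] by blast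
  have BE0: "BE \<ge> 0" using BE[of a] ab by force
  have Bw0: "Bw \<ge> 0" using Bw[of a] ab by force
  define I where "I = integral {a..b} (\<lambda>t. w t * E t * E t)"
  define K where "K = (b - a) * (Bw * BE)"
  have K0: "K \<ge> 0" unfolding K_def using ab BE0 Bw0 by simp
  have bnd: "\<bar>I\<bar> \<le> K * e" if e: "e > 0" for e
  proof -
    obtain P where P: "polynomial_function P" "\<And>t. t \<in> {a..b} \<Longrightarrow> norm (E t - P t) < e"
      using Stone_Weierstrass_polynomial_function[OF compact_Icc Ec e] by blast
    have wPp: "polynomial_function (\<lambda>t. w t * P t)"
      using polynomial_function_mult[OF wp P(1)] by simp
    have "integral {a..b} (\<lambda>t. (w t * P t) * E t) = 0"
      by (rule H[OF wPp]) (simp_all add: w_def)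
    have c1: "continuous_on {a..b} (\<lambda>t. w t * E t * E t)" by (intro continuous_intros wc Ec)
    have c2: "continuous_on {a..b} (\<lambda>t. (w t * P t) * E t)"
      by (intro continuous_intros wc Ec continuous_on_polymonial_function[OF P(1)])
    have "I = integral {a..b} (\<lambda>t. w t * E t * E t) - integral {a..b} (\<lambda>t. (w t * P t) * E t)"
      using \<open>integral {a..b} (\<lambda>t. (w t * P t) * E t) = 0\<close> by (simp add: I_def)
    also have "\<dots> = integral {a..b} (\<lambda>t. w t * E t * (E t - P t))"
      using integral_diff[OF integrable_continuous_interval[OF c1] integrable_continuous_interval[OF c2]]
      by (simp add: algebra_simps)
    finally have Ieq: "I = integral {a..b} (\<lambda>t. w t * E t * (E t - P t))" .
    have c3: "continuous_on {a..b} (\<lambda>t. w t * E t * (E t - P t))"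
      by (intro continuous_intros wc Ec continuous_on_polymonial_function[OF P(1)])
    have "norm (integral {a..b} (\<lambda>t. w t * E t * (E t - P t))) \<le> integral {a..b} (\<lambda>t. Bw * BE * e)"
    proof (rule integral_norm_bound_integral[OF integrable_continuous_interval[OF c3]])
      show "(\<lambda>t. Bw * BE * e) integrable_on {a..b}" by (rule integrable_const_ivl)
      fix t assume t: "t \<in> {a..b}"
      have "\<bar>w t * E t * (E t - P t)\<bar> = \<bar>w t\<bar> * \<bar>E t\<bar> * \<bar>E t - P t\<bar>" by (simp add: abs_mult)
      also have "\<dots> \<le> Bw * BE * e"
        using Bw[OF t] BE[OF t] P(2)[OF t] Bw0 BE0
        by (intro mult_mono) auto
      finally show "norm (w t * E t * (E t - P t)) \<le> Bw * BE * e" by simp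
    qed
    then show ?thesis using Ieq ab by (simp add: K_def mult_ac)
  qed
  have I0: "I = 0"
  proof (rule ccontr)
    assume "I \<noteq> 0"
    then have "\<bar>I\<bar> > 0" by simp
    define e where "e = \<bar>I\<bar> / (K + 1)"
    have e: "e > 0" using \<open>\<bar>I\<bar> > 0\<close> K0 by (simp add: e_def)
    have "K * e < \<bar>I\<bar>" using \<open>\<bar>I\<bar> > 0\<close> K0 by (simp add: e_def field_simps)
    with bnd[OF e] show False by simp
  qed
  have c1: "continuous_on {a..b} (\<lambda>t. w t * E t * E t)" by (intro continuous_intros wc Ec)
  have nn: "\<And>t. t \<in> {a..b} \<Longrightarrow> w t * E t * E t \<ge> 0"
    by (simp add: w_def mult.assoc)
  have z: "\<forall>t\<in>{a..b}. w t * E t * E t = 0"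
    using integral_eq_0_iff[OF c1 ab nn] I0 by (simp add: I_def)
  have "E t = 0" if t: "t \<in> {a<..<b}" for t
  proof -
    have "w t \<noteq> 0" using t by (simp add: w_def)
    then show ?thesis using z t by auto
  qed
  moreover have "continuous_on (closure {a<..<b}) E" using Ec ab by simp
  ultimately show ?thesis
    using continuous_constant_on_closure[of "{a<..<b}" E 0] ab by auto
qed




lemma caputo_rep:
  fixes y y' :: "real \<Rightarrow> real" and a b t \<alpha> \<rho> :: real
  assumes ab: "a < b"
    and D: "\<And>\<tau>. \<tau> \<in> {a..b} \<Longrightarrow> (y has_real_derivative y' \<tau>) (at \<tau> within {a..b})"
    and t: "t \<in> {a..b}"
  shows "caputo \<alpha> \<rho> a b y t = \<rho> powr \<alpha> / Gamma (1 - \<alpha>) * integral {a..t} (\<lambda>\<tau>. kern \<alpha> \<rho> t \<tau> * y' \<tau>)"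
proof -
  have "integral {a..t} (\<lambda>\<tau>. (t powr \<rho> - \<tau> powr \<rho>) powr (- \<alpha>) * vector_derivative y (at \<tau> within {a..b}))
      = integral {a..t} (\<lambda>\<tau>. kern \<alpha> \<rho> t \<tau> * y' \<tau>)"
  proof (rule integral_cong)
    fix \<tau> assume "\<tau> \<in> {a..t}"
    then have \<tau>: "\<tau> \<in> {a..b}" using t by auto
    have "vector_derivative y (at \<tau> within {a..b}) = y' \<tau>"
      by (rule vector_derivative_within_closed_interval[OF ab \<tau>])
         (use D[OF \<tau>] in \<open>simp add: has_real_derivative_iff_has_vector_derivative\<close>)
    then show "(t powr \<rho> - \<tau> powr \<rho>) powr (- \<alpha>) * vector_derivative y (at \<tau> within {a..b})
      = kern \<alpha> \<rho> t \<tau> * y' \<tau>" by (simp add: kern_def)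
  qed
  then show ?thesis by (simp add: caputo_def)
qed

lemma C1_ext:
  fixes x :: "real \<Rightarrow> real"
  assumes "C1_on a b x" "a \<le> b"
  obtains x' where "continuous_on UNIV x'"
    "\<And>\<tau>. \<tau> \<in> {a..b} \<Longrightarrow> (x has_real_derivative x' \<tau>) (at \<tau> within {a..b})"
proof -
  obtain d where d: "continuous_on {a..b} d" "\<forall>t\<in>{a..b}. (x has_real_derivative d t) (at t within {a..b})"
    using assms(1) unfolding C1_on_def by blast
  define cl where "cl t = max a (min b t)" for t :: real
  have clc: "continuous_on UNIV cl" unfolding cl_def by (intro continuous_intros)
  have clr: "cl ` UNIV \<subseteq> {a..b}" using assms(2) by (auto simp: cl_def)
  have cont: "continuous_on UNIV (\<lambda>t. d (cl t))"
    by (rule continuous_on_compose2[OF d(1) clc clr])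
  have "(x has_real_derivative d (cl \<tau>)) (at \<tau> within {a..b})" if "\<tau> \<in> {a..b}" for \<tau>
  proof -
    have "cl \<tau> = \<tau>" using that by (auto simp: cl_def)
    then show ?thesis using d(2) that by simp
  qed
  then show ?thesis using that[OF cont] by blast
qed




lemma comp3:
  fixes F :: "real \<Rightarrow> real \<Rightarrow> real \<Rightarrow> real" and S :: "'a::topological_space set"
  assumes F: "continuous_on ({a..b} \<times> UNIV \<times> UNIV) (\<lambda>(t, u, v). F t u v)"
    and p: "continuous_on S p" and q: "continuous_on S q" and r: "continuous_on S r"
    and pS: "\<And>z. z \<in> S \<Longrightarrow> p z \<in> {a..b}"
  shows "continuous_on S (\<lambda>z. F (p z) (q z) (r z))"
proof -
  have "continuous_on S (\<lambda>z. (p z, q z, r z))" by (intro continuous_on_Pair p q r)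
  moreover have "(\<lambda>z. (p z, q z, r z)) ` S \<subseteq> {a..b} \<times> UNIV \<times> UNIV" using pS by auto
  ultimately show ?thesis using continuous_on_compose2[OF F] by fastforce
qed

lemma lint_integrable:
  fixes f :: "real \<Rightarrow> real" and a t \<alpha> \<rho> :: real
  assumes fc: "continuous_on UNIV f" and "0 < a" "a \<le> t" "0 < \<rho>" "0 < \<alpha>" "\<alpha> < 1"
  shows "(\<lambda>\<tau>. kern \<alpha> \<rho> t \<tau> * f \<tau>) integrable_on {a..t}"
proof -
  obtain B where B: "\<And>x. x \<in> {a..t} \<Longrightarrow> \<bar>f x\<bar> \<le> B"
    using cont_bound[OF continuous_on_subset[OF fc subset_UNIV]] by blast
  show ?thesis using lint_eq(1)[OF cont_meas[OF fc], of a t B t \<rho> \<alpha>] B assms by auto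
qed




theorem mainTheorem2:
  fixes a b \<alpha> \<rho> xa xb :: real
    and L L2 L3 :: "real \<Rightarrow> real \<Rightarrow> real \<Rightarrow> real"
    and x :: "real \<Rightarrow> real"
  assumes "0 < a" "a < b" "0 < \<alpha>" "\<alpha> < 1" "0 < \<rho>"
    and L_cont: "continuous_on ({a..b} \<times> UNIV \<times> UNIV) (\<lambda>(t, u, v). L t u v)"
    and L2_deriv: "\<And>t u v. t \<in> {a..b} \<Longrightarrow> ((\<lambda>w. L t w v) has_real_derivative L2 t u v) (at u)"
    and L3_deriv: "\<And>t u v. t \<in> {a..b} \<Longrightarrow> ((\<lambda>w. L t u w) has_real_derivative L3 t u v) (at v)"
    and L2_cont: "continuous_on ({a..b} \<times> UNIV \<times> UNIV) (\<lambda>(t, u, v). L2 t u v)"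
    and L3_cont: "continuous_on ({a..b} \<times> UNIV \<times> UNIV) (\<lambda>(t, u, v). L3 t u v)"
    and rightD_ok: "\<And>y. C1_on a b y \<Longrightarrow>
        (\<forall>t\<in>{a..b}. right_int \<alpha> \<rho> b (\<lambda>\<tau>. L3 \<tau> (y \<tau>) (caputo \<alpha> \<rho> a b y \<tau>))
                        differentiable (at t within {a..b}))
      \<and> continuous_on {a..b} (rightD \<alpha> \<rho> a b (\<lambda>\<tau>. L3 \<tau> (y \<tau>) (caputo \<alpha> \<rho> a b y \<tau>)))"
    and min: "local_minimizer_on \<alpha> \<rho> a b (functional_J \<alpha> \<rho> a b L)
               {y. C1_on a b y \<and> y a = xa \<and> y b = xb} x"
  shows "\<forall>t\<in>{a..b}. L2 t (x t) (caputo \<alpha> \<rho> a b x t)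
           - rightD \<alpha> \<rho> a b (\<lambda>\<tau>. L3 \<tau> (x \<tau>) (caputo \<alpha> \<rho> a b x \<tau>)) t = 0"
proof -
  note pa = assms(1-5)
  have ab: "a \<le> b" using pa by simp
  define c where "c = \<rho> powr \<alpha> / Gamma (1 - \<alpha>)"
  have c0: "c > 0" using pa by (simp add: c_def)
  have xC1: "C1_on a b x" and xa: "x a = xa" and xb: "x b = xb"
    using min by (auto simp: local_minimizer_on_def)
  obtain \<delta> where \<delta>: "\<delta> > 0" and minJ: "\<And>y. C1_on a b y \<Longrightarrow> y a = xa \<Longrightarrow> y b = xb \<Longrightarrow>
      C1norm \<alpha> \<rho> a b (\<lambda>t. y t - x t) < \<delta> \<Longrightarrow> functional_J \<alpha> \<rho> a b L x \<le> functional_J \<alpha> \<rho> a b L y"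
    using min unfolding local_minimizer_on_def by auto
  obtain x' where x'c: "continuous_on UNIV x'"
    and x'd: "\<And>\<tau>. \<tau> \<in> {a..b} \<Longrightarrow> (x has_real_derivative x' \<tau>) (at \<tau> within {a..b})"
    using C1_ext[OF xC1 ab] by blast
  have xc: "continuous_on {a..b} x"
    unfolding continuous_on_eq_continuous_within using x'd DERIV_continuous by blast
  define X where "X t = caputo \<alpha> \<rho> a b x t" for t
  have Xrep: "X t = c * integral {a..t} (\<lambda>\<tau>. kern \<alpha> \<rho> t \<tau> * x' \<tau>)" if "t \<in> {a..b}" for t
    unfolding X_def c_def using caputo_rep[OF pa(2) x'd that] by simp
  have Xc: "continuous_on {a..b} X"
  proof -
    have "continuous_on {a..b} (\<lambda>t. c * integral {a..t} (\<lambda>\<tau>. kern \<alpha> \<rho> t \<tau> * x' \<tau>))"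
      by (intro continuous_intros lint_cont[OF x'c]) (use pa in auto)
    then show ?thesis using continuous_on_eq Xrep by (metis (no_types, lifting))
  qed
  define g where "g t = L3 t (x t) (X t)" for t
  define R where "R = right_int \<alpha> \<rho> b g"
  define E where "E t = L2 t (x t) (X t) - rightD \<alpha> \<rho> a b g t" for t
  have g_eq: "g = (\<lambda>\<tau>. L3 \<tau> (x \<tau>) (caputo \<alpha> \<rho> a b x \<tau>))" unfolding g_def X_def by simp
  have Rdiff: "\<forall>t\<in>{a..b}. R differentiable (at t within {a..b})"
    and rDc: "continuous_on {a..b} (rightD \<alpha> \<rho> a b g)"
    using rightD_ok[OF xC1] unfolding g_eq R_def by auto
  have L2c: "continuous_on {a..b} (\<lambda>t. L2 t (x t) (X t))"
    by (rule comp3[OF L2_cont]) (auto intro: continuous_intros xc Xc)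
  have gc: "continuous_on {a..b} g" unfolding g_def
    by (rule comp3[OF L3_cont]) (auto intro: continuous_intros xc Xc)
  have Ec: "continuous_on {a..b} E" unfolding E_def by (intro continuous_intros L2c rDc)
  have key: "integral {a..b} (\<lambda>t. \<eta> t * E t) = 0"
    if \<eta>p: "polynomial_function \<eta>" and \<eta>a: "\<eta> a = 0" and \<eta>b: "\<eta> b = 0" for \<eta>
  proof -
    obtain \<eta>' where \<eta>'p: "polynomial_function \<eta>'" and \<eta>v: "\<And>t. (\<eta> has_vector_derivative \<eta>' t) (at t)"
      using has_vector_derivative_polynomial_function[OF \<eta>p] by blast
    have \<eta>d: "\<And>t. (\<eta> has_real_derivative \<eta>' t) (at t)"
      using \<eta>v by (simp add: has_real_derivative_iff_has_vector_derivative)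
    have \<eta>c: "continuous_on S \<eta>" for S using continuous_on_polymonial_function[OF \<eta>p] .
    have \<eta>'c: "continuous_on S \<eta>'" for S using continuous_on_polymonial_function[OF \<eta>'p] .
    define Y where "Y t = caputo \<alpha> \<rho> a b \<eta> t" for t
    have Yrep: "Y t = c * integral {a..t} (\<lambda>\<tau>. kern \<alpha> \<rho> t \<tau> * \<eta>' \<tau>)" if "t \<in> {a..b}" for t
      unfolding Y_def c_def using caputo_rep[OF pa(2) has_field_derivative_at_within[OF \<eta>d] that] by simp
    have Yc: "continuous_on {a..b} Y"
    proof -
      have "continuous_on {a..b} (\<lambda>t. c * integral {a..t} (\<lambda>\<tau>. kern \<alpha> \<rho> t \<tau> * \<eta>' \<tau>))"
        by (intro continuous_intros lint_cont[OF \<eta>'c]) (use pa in auto)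
      then show ?thesis using continuous_on_eq Yrep by (metis (no_types, lifting))
    qed
    have Dsum: "((\<lambda>t. x t + e * \<eta> t) has_real_derivative x' \<tau> + e * \<eta>' \<tau>) (at \<tau> within {a..b})"
      if "\<tau> \<in> {a..b}" for e \<tau>
      using DERIV_add[OF x'd[OF that] DERIV_cmult[OF has_field_derivative_at_within[OF \<eta>d], of e]] .
    have Dm: "((\<lambda>t. e * \<eta> t) has_real_derivative e * \<eta>' \<tau>) (at \<tau> within {a..b})" for e \<tau>
      using DERIV_cmult[OF has_field_derivative_at_within[OF \<eta>d], of e] .
    have capsum: "caputo \<alpha> \<rho> a b (\<lambda>t. x t + e * \<eta> t) t = X t + e * Y t" if t: "t \<in> {a..b}" for e t
    proof -
      have i1: "(\<lambda>\<tau>. kern \<alpha> \<rho> t \<tau> * x' \<tau>) integrable_on {a..t}"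
        by (rule lint_integrable[OF x'c]) (use pa t in auto)
      have i2: "(\<lambda>\<tau>. e * (kern \<alpha> \<rho> t \<tau> * \<eta>' \<tau>)) integrable_on {a..t}"
        using integrable_on_cmult_left[OF lint_integrable[OF \<eta>'c, of a t \<rho> \<alpha>]] pa t by auto
      have "caputo \<alpha> \<rho> a b (\<lambda>t. x t + e * \<eta> t) t
          = c * integral {a..t} (\<lambda>\<tau>. kern \<alpha> \<rho> t \<tau> * (x' \<tau> + e * \<eta>' \<tau>))"
        unfolding c_def using caputo_rep[OF pa(2) Dsum t] by simp
      also have "\<dots> = c * integral {a..t} (\<lambda>\<tau>. kern \<alpha> \<rho> t \<tau> * x' \<tau> + e * (kern \<alpha> \<rho> t \<tau> * \<eta>' \<tau>))"
        by (simp add: algebra_simps)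
      also have "\<dots> = X t + e * Y t"
        using integral_add[OF i1 i2] Xrep[OF t] Yrep[OF t] by (simp add: algebra_simps)
      finally show ?thesis .
    qed
    have capm: "caputo \<alpha> \<rho> a b (\<lambda>t. e * \<eta> t) t = e * Y t" if t: "t \<in> {a..b}" for e t
    proof -
      have "caputo \<alpha> \<rho> a b (\<lambda>t. e * \<eta> t) t
          = c * integral {a..t} (\<lambda>\<tau>. kern \<alpha> \<rho> t \<tau> * (e * \<eta>' \<tau>))"
        unfolding c_def using caputo_rep[OF pa(2) Dm t] by simp
      also have "\<dots> = c * integral {a..t} (\<lambda>\<tau>. e * (kern \<alpha> \<rho> t \<tau> * \<eta>' \<tau>))"
        by (simp add: algebra_simps)
      also have "\<dots> = e * Y t" using Yrep[OF t] by simp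
      finally show ?thesis .
    qed
    obtain B\<eta> where B\<eta>: "\<And>t. t \<in> {a..b} \<Longrightarrow> \<bar>\<eta> t\<bar> \<le> B\<eta>" using cont_bound[OF \<eta>c] by blast
    obtain BY where BY: "\<And>t. t \<in> {a..b} \<Longrightarrow> \<bar>Y t\<bar> \<le> BY" using cont_bound[OF Yc] by blast
    have B\<eta>0: "B\<eta> \<ge> 0" using B\<eta>[of a] ab by force
    have BY0: "BY \<ge> 0" using BY[of a] ab by force
    define d where "d = \<delta> / (B\<eta> + BY + 1)"
    have d0: "d > 0" using \<delta> B\<eta>0 BY0 by (simp add: d_def)
    define \<phi> where "\<phi> e = integral {a..b} (\<lambda>t. L t (x t + e * \<eta> t) (X t + e * Y t))" for e
    have \<phi>J: "\<phi> e = functional_J \<alpha> \<rho> a b L (\<lambda>t. x t + e * \<eta> t)" for e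
      unfolding \<phi>_def functional_J_def by (rule integral_cong) (simp add: capsum)
    have \<phi>0: "\<phi> 0 = functional_J \<alpha> \<rho> a b L x" using \<phi>J[of 0] by simp
    have locmin: "\<forall>e. \<bar>0 - e\<bar> < d \<longrightarrow> \<phi> 0 \<le> \<phi> e"
    proof (intro allI impI)
      fix e assume e: "\<bar>0 - e\<bar> < d"
      have C1y: "C1_on a b (\<lambda>t. x t + e * \<eta> t)"
        unfolding C1_on_def
        by (rule exI[of _ "\<lambda>\<tau>. x' \<tau> + e * \<eta>' \<tau>"])
           (auto intro!: continuous_intros continuous_on_subset[OF x'c] \<eta>'c Dsum)
      have S1: "(SUP t\<in>{a..b}. \<bar>e * \<eta> t\<bar>) \<le> \<bar>e\<bar> * B\<eta>"
        by (rule cSUP_least) (use ab in \<open>auto simp: abs_mult intro!: mult_left_mono B\<eta>\<close>)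
      have "(SUP t\<in>{a..b}. \<bar>caputo \<alpha> \<rho> a b (\<lambda>t. e * \<eta> t) t\<bar>) = (SUP t\<in>{a..b}. \<bar>e * Y t\<bar>)"
        by (rule SUP_cong) (simp_all add: capm)
      also have "\<dots> \<le> \<bar>e\<bar> * BY"
        by (rule cSUP_least) (use ab in \<open>auto simp: abs_mult intro!: mult_left_mono BY\<close>)
      finally have S2: "(SUP t\<in>{a..b}. \<bar>caputo \<alpha> \<rho> a b (\<lambda>t. e * \<eta> t) t\<bar>) \<le> \<bar>e\<bar> * BY" .
      have "C1norm \<alpha> \<rho> a b (\<lambda>t. (x t + e * \<eta> t) - x t) = C1norm \<alpha> \<rho> a b (\<lambda>t. e * \<eta> t)" by simp
      also have "\<dots> \<le> \<bar>e\<bar> * B\<eta> + \<bar>e\<bar> * BY" unfolding C1norm_def using S1 S2 by simp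
      also have "\<dots> \<le> \<bar>e\<bar> * (B\<eta> + BY + 1)" by (simp add: algebra_simps)
      also have "\<dots> < d * (B\<eta> + BY + 1)"
        using e B\<eta>0 BY0 by (intro mult_strict_right_mono) auto
      also have "\<dots> = \<delta>" using B\<eta>0 BY0 by (simp add: d_def)
      finally have "C1norm \<alpha> \<rho> a b (\<lambda>t. (x t + e * \<eta> t) - x t) < \<delta>" .
      from minJ[OF C1y _ _ this] show "\<phi> 0 \<le> \<phi> e"
        using \<eta>a \<eta>b xa xb by (simp add: \<phi>0 \<phi>J)
    qed
    define fx where "fx e t = L2 t (x t + e * \<eta> t) (X t + e * Y t) * \<eta> t
                          + L3 t (x t + e * \<eta> t) (X t + e * Y t) * Y t" for e t
    have xs: "continuous_on (UNIV \<times> {a..b}) (\<lambda>z. x (snd z))"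
      by (rule continuous_on_compose2[OF xc continuous_on_snd]) auto
    have Xs: "continuous_on (UNIV \<times> {a..b}) (\<lambda>z. X (snd z))"
      by (rule continuous_on_compose2[OF Xc continuous_on_snd]) auto
    have Ys: "continuous_on (UNIV \<times> {a..b}) (\<lambda>z. Y (snd z))"
      by (rule continuous_on_compose2[OF Yc continuous_on_snd]) auto
    have \<eta>s: "continuous_on (UNIV \<times> {a..b}) (\<lambda>z. \<eta> (snd z))"
      by (rule continuous_on_compose2[OF \<eta>c continuous_on_snd]) auto
    have deriv: "(\<phi> has_real_derivative integral {a..b} (fx 0)) (at 0)"
    proof -
      have "((\<lambda>e. integral (cbox a b) (\<lambda>t. L t (x t + e * \<eta> t) (X t + e * Y t))) has_field_derivative
            integral (cbox a b) (fx 0)) (at 0 within UNIV)"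
      proof (rule leibniz_rule_field_derivative)
        fix e :: real and t :: real assume t: "t \<in> cbox a b"
        then have t': "t \<in> {a..b}" by simp
        have c3: "continuous_on UNIV (\<lambda>(u, v). L3 t u v)"
        proof -
          have "continuous_on UNIV (\<lambda>z::real\<times>real. L3 t (fst z) (snd z))"
            by (rule comp3[OF L3_cont]) (use t' in \<open>auto intro: continuous_intros\<close>)
          then show ?thesis by (simp add: case_prod_unfold)
        qed
        show "((\<lambda>e. L t (x t + e * \<eta> t) (X t + e * Y t)) has_field_derivative fx e t) (at e within UNIV)"
          unfolding fx_def
          using chain2[of "L t" "L2 t" "L3 t" "x t" "\<eta> t" "X t" "Y t" e] L2_deriv[OF t'] L3_deriv[OF t'] c3
          by simp
      next
        fix e :: real assume "e \<in> UNIV"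
        have "continuous_on {a..b} (\<lambda>t. L t (x t + e * \<eta> t) (X t + e * Y t))"
          by (rule comp3[OF L_cont]) (auto intro!: continuous_intros xc Xc Yc \<eta>c)
        then show "(\<lambda>t. L t (x t + e * \<eta> t) (X t + e * Y t)) integrable_on cbox a b"
          using integrable_continuous_interval by simp
      next
        have "continuous_on (UNIV \<times> {a..b}) (\<lambda>z. fx (fst z) (snd z))"
          unfolding fx_def
          by (intro continuous_intros comp3[OF L2_cont] comp3[OF L3_cont] xs Xs Ys \<eta>s) auto
        then show "continuous_on (UNIV \<times> cbox a b) (\<lambda>(e, t). fx e t)"
          by (simp add: case_prod_unfold)
      qed auto
      then show ?thesis unfolding \<phi>_def by simp
    qed
    have I0: "integral {a..b} (fx 0) = 0" by (rule DERIV_local_min[OF deriv d0 locmin])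
    have fx0: "fx 0 = (\<lambda>t. L2 t (x t) (X t) * \<eta> t + g t * Y t)" by (rule ext) (simp add: fx_def g_def)
    \<comment> \<open>fractional integration by parts\<close>
    define cl where "cl t = max a (min b t)" for t :: real
    have clc: "continuous_on UNIV cl" unfolding cl_def by (intro continuous_intros)
    have clr: "cl ` UNIV \<subseteq> {a..b}" using ab by (auto simp: cl_def)
    have cli: "t \<in> {a..b} \<Longrightarrow> cl t = t" for t by (auto simp: cl_def)
    have gclc: "continuous_on UNIV (\<lambda>t. g (cl t))"
      by (rule continuous_on_compose2[OF gc clc clr])
    have sw: "integral {a..b} (\<lambda>t. g (cl t) * integral {a..t} (\<lambda>\<tau>. kern \<alpha> \<rho> t \<tau> * \<eta>' \<tau>))
       = integral {a..b} (\<lambda>\<tau>. \<eta>' \<tau> * integral {\<tau>..b} (\<lambda>t. kern \<alpha> \<rho> t \<tau> * g (cl t)))"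
      by (rule swap[OF gclc \<eta>'c]) (use pa in auto)
    have lhs: "integral {a..b} (\<lambda>t. g t * Y t)
        = c * integral {a..b} (\<lambda>t. g (cl t) * integral {a..t} (\<lambda>\<tau>. kern \<alpha> \<rho> t \<tau> * \<eta>' \<tau>))"
    proof -
      have "integral {a..b} (\<lambda>t. g t * Y t)
          = integral {a..b} (\<lambda>t. c * (g (cl t) * integral {a..t} (\<lambda>\<tau>. kern \<alpha> \<rho> t \<tau> * \<eta>' \<tau>)))"
        by (rule integral_cong) (simp add: cli Yrep)
      then show ?thesis by simp
    qed
    have rhs: "integral {a..b} (\<lambda>\<tau>. \<eta>' \<tau> * integral {\<tau>..b} (\<lambda>t. kern \<alpha> \<rho> t \<tau> * g (cl t)))
        = integral {a..b} (\<lambda>\<tau>. \<eta>' \<tau> * R \<tau>)"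
    proof (rule integral_cong)
      fix \<tau> assume \<tau>: "\<tau> \<in> {a..b}"
      have "integral {\<tau>..b} (\<lambda>t. kern \<alpha> \<rho> t \<tau> * g (cl t)) = R \<tau>"
        unfolding R_def right_int_def
        by (rule integral_cong) (use \<tau> in \<open>auto simp: cli kern_def\<close>)
      then show "\<eta>' \<tau> * integral {\<tau>..b} (\<lambda>t. kern \<alpha> \<rho> t \<tau> * g (cl t)) = \<eta>' \<tau> * R \<tau>" by simp
    qed
    define R' where "R' t = vector_derivative R (at t within {a..b})" for t
    have rD: "rightD \<alpha> \<rho> a b g t = c * R' t" for t
      unfolding rightD_def R'_def R_def c_def ..
    have R'c: "continuous_on {a..b} R'"
    proof -
      have "continuous_on {a..b} (\<lambda>t. rightD \<alpha> \<rho> a b g t / c)" by (intro continuous_intros rDc) (use c0 in auto)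
      moreover have "rightD \<alpha> \<rho> a b g t / c = R' t" for t using c0 by (simp add: rD)
      ultimately show ?thesis by simp
    qed
    have Rc: "continuous_on {a..b} R"
      unfolding continuous_on_eq_continuous_within
      using Rdiff differentiable_imp_continuous_within by blast
    have Rv: "(R has_vector_derivative R' t) (at t)" if t: "t \<in> {a<..<b}" for t
    proof -
      have "(R has_vector_derivative R' t) (at t within {a..b})"
      proof -
        have "R differentiable (at t within {a..b})" using Rdiff t by auto
        then show ?thesis unfolding R'_def using vector_derivative_works by blast
      qed
      then show ?thesis using at_within_Icc_at[of a t b] t by simp
    qed
    have \<eta>R'c: "continuous_on {a..b} (\<lambda>t. \<eta> t * R' t)" by (intro continuous_intros \<eta>c R'c)
    define IR where "IR = integral {a..b} (\<lambda>t. \<eta> t * R' t)"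
    have hi: "((\<lambda>t. \<eta> t * R' t) has_integral (\<eta> b * R b - \<eta> a * R a - (- IR))) {a..b}"
      using integrable_integral[OF integrable_continuous_interval[OF \<eta>R'c]] \<eta>a \<eta>b
      by (simp add: IR_def)
    have bp: "((\<lambda>t. \<eta>' t * R t) has_integral (- IR)) {a..b}"
      by (rule integration_by_parts_interior[OF bounded_bilinear_mult ab \<eta>c Rc _ Rv hi])
         (use \<eta>v in auto)
    have gY: "integral {a..b} (\<lambda>t. g t * Y t) = - integral {a..b} (\<lambda>t. \<eta> t * rightD \<alpha> \<rho> a b g t)"
    proof -
      have "integral {a..b} (\<lambda>t. g t * Y t) = c * (- IR)"
        using lhs sw rhs integral_unique[OF bp] by simp
      also have "\<dots> = - integral {a..b} (\<lambda>t. c * (\<eta> t * R' t))" by (simp add: IR_def)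
      also have "\<dots> = - integral {a..b} (\<lambda>t. \<eta> t * rightD \<alpha> \<rho> a b g t)"
        by (simp add: rD mult_ac)
      finally show ?thesis .
    qed
    have cA: "continuous_on {a..b} (\<lambda>t. L2 t (x t) (X t) * \<eta> t)" by (intro continuous_intros L2c \<eta>c)
    have cB: "continuous_on {a..b} (\<lambda>t. g t * Y t)" by (intro continuous_intros gc Yc)
    have cC: "continuous_on {a..b} (\<lambda>t. \<eta> t * rightD \<alpha> \<rho> a b g t)" by (intro continuous_intros \<eta>c rDc)
    have "0 = integral {a..b} (\<lambda>t. L2 t (x t) (X t) * \<eta> t + g t * Y t)" using I0 unfolding fx0 by simp
    also have "\<dots> = integral {a..b} (\<lambda>t. L2 t (x t) (X t) * \<eta> t) + integral {a..b} (\<lambda>t. g t * Y t)"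
      by (rule integral_add[OF integrable_continuous_interval[OF cA] integrable_continuous_interval[OF cB]])
    also have "\<dots> = integral {a..b} (\<lambda>t. L2 t (x t) (X t) * \<eta> t) - integral {a..b} (\<lambda>t. \<eta> t * rightD \<alpha> \<rho> a b g t)"
      using gY by simp
    also have "\<dots> = integral {a..b} (\<lambda>t. L2 t (x t) (X t) * \<eta> t - \<eta> t * rightD \<alpha> \<rho> a b g t)"
      by (rule integral_diff[symmetric, OF integrable_continuous_interval[OF cA] integrable_continuous_interval[OF cC]])
    also have "\<dots> = integral {a..b} (\<lambda>t. \<eta> t * E t)"
      by (simp add: E_def algebra_simps)
    finally show ?thesis by simp
  qed
  have "\<forall>t\<in>{a..b}. E t = 0" by (rule fund[OF pa(2) Ec key]) auto
  then show ?thesis unfolding E_def g_eq X_def by simp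
qed


end
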